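(* Let $k>4$ be an odd integer. Assume that when the procedure $\mathrm{Permutations}$ is run on a list of $k$ pairwise distinct elements $(x_0,x_1,\dots,x_{k-1})$ (i.e. $\mathrm{Permutations}(L,0,\mathrm{Func})$ with $L=(x_0,\dots,x_{k-1})$), the last permutation it produces is $(x_1,x_0,x_2,x_3,\dots,x_{k-1})$. Then, when $\mathrm{Permutations}$ is run on the list $(0,1,2,\dots,k)$ of $k+1$ elements, each of the $k+1$ elements is inserted exactly once at the beginning of the list (i.e. the $k+1$ recursive calls $\mathrm{Permutations}(L,1,\mathrm{Func})$ made by the top-level invocation are made with pairwise distinct elements at position $0$), and the last permutation produced is $(1,4,3,5,6,7,8,\dots,k,2,0)$.
   Context: Lists are 0-indexed. For a list $L$, $\mathrm{extract}(L,j)$ removes the element at position $j$ from $L$ and returns it; $\mathrm{Insert}(L,i,x)$ inserts $x$ into $L$ so that it occupies position $i$, shifting the elements previously at positions $\ge i$ one step to the right. Each combined operation $\mathrm{Insert}(L,i,\mathrm{extract}(L,j))$ first extracts, then inserts, so the length of $L$ is unchanged. The recursive procedure $\mathrm{Permutations}(L,i,\mathrm{Func})$ (with $\mathrm{Func}$ a callback) is: let $n=\mathrm{length}(L)$. If $i\ge n-1$, call $\mathrm{Func}(L)$. Otherwise: (1) call $\mathrm{Permutations}(L,i+1,\mathrm{Func})$; (2) do $\mathrm{Insert}(L,i,\mathrm{extract}(L,i+1))$ and call $\mathrm{Permutations}(L,i+1,\mathrm{Func})$; (3) repeat $\max(n-i-3,0)$ times: if $n-i$ is even, do $\mathrm{Insert}(L,i,\mathrm{extract}(L,n-1))$,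 otherwise do $\mathrm{Insert}(L,i,\mathrm{extract}(L,i+1))$; then call $\mathrm{Permutations}(L,i+1,\mathrm{Func})$; (4) if $n-i>2$: do $\mathrm{Insert}(L,i,\mathrm{extract}(L,i+1))$ and call $\mathrm{Permutations}(L,i+1,\mathrm{Func})$. The main call is $\mathrm{Permutations}(L,0,\mathrm{Func})$; each list passed to $\mathrm{Func}$ is a "produced permutation". A call $\mathrm{Permutations}(L,i,\mathrm{Func})$ modifies only positions $\ge i$, and its effect on that suffix depends only on the suffix length $n-i$. The "last permutation produced" when run on a list is the state of the list when the main call returns (which equals the argument of the last call to $\mathrm{Func}$). *)

theory Defs
  imports Main
begin

definition extract_rest :: "'a list \<Rightarrow> nat \<Rightarrow> 'a list" where
  "extract_rest L j = take j L @ drop (Suc j) L"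

definition insert_at :: "'a list \<Rightarrow> nat \<Rightarrow> 'a \<Rightarrow> 'a list" where
  "insert_at L i x = take i L @ x # drop i L"

definition mv :: "nat \<Rightarrow> nat \<Rightarrow> 'a list \<Rightarrow> 'a list" where
  "mv i j L = insert_at (extract_rest L j) i (L ! j)"

definition step3_idx :: "nat \<Rightarrow> nat \<Rightarrow> nat" where
  "step3_idx n i = (if even (n - i) then n - 1 else i + 1)"

text \<open>perm n i L: the state of the list after Permutations(L,i,Func) returns,
  where n is the (invariant) length of the list.  The condition i \<ge> n-1 (integers)
  is written as n \<le> Suc i.\<close>
function perm :: "nat \<Rightarrow> nat \<Rightarrow> 'a list \<Rightarrow> 'a list" where
  "perm n i L =
    (if n \<le> Suc i then L
     else
      (let L1 = perm n (Suc i) L;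
           L2 = perm n (Suc i) (mv i (Suc i) L1);
           L3 = foldl (\<lambda>A _. perm n (Suc i) (mv i (step3_idx n i) A)) L2
                  [0..<(n - i - 3)];
           L4 = (if n - i > 2 then perm n (Suc i) (mv i (Suc i) L3) else L3)
       in L4))"
  by pat_completeness auto
termination
  by (relation "measure (\<lambda>(n, i, L). n - i)") auto

text \<open>The list states with which Permutations(L,i+1,Func) is called directly by
  Permutations(L,i,Func), in order.\<close>
definition calls :: "nat \<Rightarrow> nat \<Rightarrow> 'a list \<Rightarrow> 'a list list" where
  "calls n i L =
    (if n \<le> Suc i then []
     else
      (let L1 = perm n (Suc i) L;
           S2 = mv i (Suc i) L1;
           L2 = perm n (Suc i) S2;
           f = (\<lambda>A. perm n (Suc i) (mv i (step3_idx n i) A));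
           S3 = map (\<lambda>j. mv i (step3_idx n i) (foldl (\<lambda>A _. f A) L2 [0..<j]))
                  [0..<(n - i - 3)];
           L3 = foldl (\<lambda>A _. f A) L2 [0..<(n - i - 3)];
           S4 = (if n - i > 2 then [mv i (Suc i) L3] else [])
       in [L, S2] @ S3 @ S4))"

end

theory Submission
  imports Defs
begin
declare perm.simps[simp del]
lemma mv_Cons: "mv (Suc i) (Suc j) (x#L) = x # mv i j L"
  by (simp add: mv_def insert_at_def extract_rest_def)
lemma step3_Suc: "Suc i < n \<Longrightarrow> step3_idx (Suc n) (Suc i) = Suc (step3_idx n i)"
  by (simp add: step3_idx_def)

lemma perm_Cons: "perm (Suc n) (Suc i) (x#L) = x # perm n i L"
proof (induction "n - i" arbitrary: i L x rule: less_induct)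
  case less
  show ?case
  proof (cases "n \<le> Suc i")
    case True then show ?thesis by (subst (1 2) perm.simps) simp
  next
    case False
    have lt: "n - Suc i < n - i" using False by simp
    have lt2: "Suc i < n" using False by simp
    note IH = less[OF lt]
    have F: "foldl (\<lambda>A _. perm (Suc n) (Suc (Suc i)) (mv (Suc i) (step3_idx (Suc n) (Suc i)) A)) (y#B) xs
          = y # foldl (\<lambda>A _. perm n (Suc i) (mv i (step3_idx n i) A)) B xs" for xs and B :: "'a list" and y
      by (induction xs arbitrary: B) (auto simp: IH mv_Cons step3_Suc[OF lt2])
    show ?thesis using False
      apply (subst (1 2) perm.simps)
      apply (simp add: Let_def IH mv_Cons F)
      done
  qed
qed

lemma mv01: "mv 0 1 (x#y#R) = y#x#R"
  by (simp add: mv_def insert_at_def extract_rest_def)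
lemma mv0k: "length B = k \<Longrightarrow> mv 0 k (B @ [x]) = x # B"
  by (simp add: mv_def insert_at_def extract_rest_def nth_append)
lemma hd_mv0: "hd (mv 0 k A) = A ! k"
  by (simp add: mv_def insert_at_def)

definition G :: "nat \<Rightarrow> nat \<Rightarrow> nat list" where
  "G k m = m # 1 # [m+1..<k+1] @ 2 # 0 # [3..<m]"

locale L1 =
  fixes k :: nat
  assumes odd: "odd k" and k4: "k > 4"
    and H: "\<forall>xs :: nat list. length xs = k \<longrightarrow> distinct xs \<longrightarrow>
           perm k 0 xs = xs ! 1 # xs ! 0 # drop 2 xs"
begin

lemma sig: fixes x y z :: nat assumes "distinct (x#y#z#R)" "length R = k - 2"
  shows "perm (k+1) 1 (x#y#z#R) = x#z#y#R"
proof -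
  have "perm (k+1) 1 (x#y#z#R) = x # perm k 0 (y#z#R)"
    using perm_Cons[of k 0 x "y#z#R"] by simp
  also have "perm k 0 (y#z#R) = z#y#R" using H[rule_format, of "y#z#R"] assms k4 by auto
  finally show ?thesis .
qed

definition f :: "nat list \<Rightarrow> nat list" where
  "f A = perm (k+1) 1 (mv 0 k A)"

lemma G_split: "4 \<le> m \<Longrightarrow> m \<le> k \<Longrightarrow> G k m = (m # 1 # [m+1..<k+1] @ 2 # 0 # [3..<m-1]) @ [m-1]"
proof -
  assume a: "4 \<le> m" "m \<le> k"
  have "[3..<Suc (m-1)] = [3..<m-1] @ [m-1]" using a by (intro upt_Suc_append) simp
  moreover have "Suc (m-1) = m" using a by simp
  ultimately have "[3..<m] = [3..<m-1] @ [m-1]" by simp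
  then show ?thesis unfolding G_def by simp
qed

lemma G_len: "4 \<le> m \<Longrightarrow> m \<le> k \<Longrightarrow> length (m # 1 # [m+1..<k+1] @ 2 # 0 # [3..<m-1]) = k"
  using k4 by auto

lemma G_nth: "4 \<le> m \<Longrightarrow> m \<le> k \<Longrightarrow> G k m ! k = m - 1"
  using G_split[of m] G_len[of m] nth_append_length by metis

lemma f_G: assumes "4 \<le> m" "m \<le> k" shows "f (G k m) = G k (m-1)"
proof -
  have mvG: "mv 0 k (G k m) = (m-1) # m # 1 # ([m+1..<k+1] @ 2 # 0 # [3..<m-1])"
    unfolding G_split[OF assms] by (rule mv0k[OF G_len[OF assms]])
  have dist: "distinct ((m-1) # m # 1 # ([m+1..<k+1] @ 2 # 0 # [3..<m-1]))"
    using assms by auto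
  have len: "length ([m+1..<k+1] @ 2 # 0 # [3..<m-1]) = k - 2" using assms k4 by auto
  have "f (G k m) = (m-1) # 1 # m # ([m+1..<k+1] @ 2 # 0 # [3..<m-1])"
    unfolding f_def mvG by (rule sig[OF dist len])
  also have "\<dots> = G k (m-1)" unfolding G_def using assms
    by (simp add: upt_conv_Cons)
  finally show ?thesis .
qed


lemma step3: "step3_idx (Suc k) 0 = k" using odd by (simp add: step3_idx_def)

definition L2 :: "nat list" where "L2 = 2#1#0#[3..<k+1]"

lemma up: "[0..<k+1] = 0#1#2#[3..<k+1]"
proof -
  have a: "[0..<k+1] = 0 # [1..<k+1]" using k4 by (simp add: upt_conv_Cons del: upt_Suc)
  have b: "[1..<k+1] = 1 # [2..<k+1]" using k4 upt_conv_Cons[of 1 "k+1"] by (simp add: numeral_2_eq_2 del: upt_Suc)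
  have c: "[2..<k+1] = 2 # [3..<k+1]" using k4 upt_conv_Cons[of 2 "k+1"] by (simp add: numeral_2_eq_2 numeral_3_eq_3 del: upt_Suc)
  show ?thesis using a b c by simp
qed

lemma L1v: "perm (k+1) 1 [0..<k+1] = 0#2#1#[3..<k+1]"
  unfolding up by (rule sig) (use k4 in auto)

lemma L2v: "perm (k+1) 1 (mv 0 1 (perm (k+1) 1 [0..<k+1])) = L2"
  unfolding L1v mv01 L2_def by (rule sig) (use k4 in auto)

lemma fL2: "f L2 = G k k"
proof -
  have e: "L2 = (2#1#0#[3..<k]) @ [k]" unfolding L2_def using k4 by simp
  have "mv 0 k L2 = k # 2#1#0#[3..<k]" unfolding e by (rule mv0k) (use k4 in simp)
  then have "f L2 = k#1#2#0#[3..<k]" unfolding f_def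
    by (simp only:) (rule sig, use k4 in auto)
  then show ?thesis by (simp add: G_def)
qed

lemma iter: "j \<le> k - 3 \<Longrightarrow> foldl (\<lambda>A _. f A) L2 [0..<Suc j] = G k (k - j)"
proof (induction j)
  case 0 then show ?case by (simp add: fL2)
next
  case (Suc j)
  have "foldl (\<lambda>A _. f A) L2 [0..<Suc (Suc j)] = f (foldl (\<lambda>A _. f A) L2 [0..<Suc j])"
    by simp
  also have "\<dots> = f (G k (k - j))" using Suc by simp
  also have "\<dots> = G k (k - j - 1)" by (rule f_G) (use Suc k4 in auto)
  also have "k - j - 1 = k - Suc j" by simp
  finally show ?case .
qed

lemma permU: "perm (k+1) 0 L = perm (k+1) 1 (mv 0 1 (foldl (\<lambda>A _. f A)
   (perm (k+1) 1 (mv 0 1 (perm (k+1) 1 L))) [0..<k-2]))"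
  by (subst perm.simps) (use k4 in \<open>simp add: Let_def f_def step3\<close>)

lemma callsU: "calls (k+1) 0 L = [L, mv 0 1 (perm (k+1) 1 L)] @
   map (\<lambda>j. mv 0 k (foldl (\<lambda>A _. f A) (perm (k+1) 1 (mv 0 1 (perm (k+1) 1 L))) [0..<j])) [0..<k-2]
   @ [mv 0 1 (foldl (\<lambda>A _. f A) (perm (k+1) 1 (mv 0 1 (perm (k+1) 1 L))) [0..<k-2])]"
  unfolding calls_def using k4 by (simp add: Let_def f_def step3)

lemma L3: "foldl (\<lambda>A _. f A) L2 [0..<k-2] = 3 # 1 # [4..<k+1] @ [2,0]"
proof -
  have "k - 2 = Suc (k - 3)" using k4 by simp
  then have "foldl (\<lambda>A _. f A) L2 [0..<k-2] = G k (k - (k-3))" using iter[of "k-3"] by simp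
  also have "k - (k-3) = 3" using k4 by simp
  finally show ?thesis by (simp add: G_def)
qed

lemma final: "perm (k+1) 0 [0..<k+1] = [1, 4, 3] @ [5..<k + 1] @ [2, 0]"
proof -
  have "perm (k+1) 0 [0..<k+1] = perm (k+1) 1 (1 # 3 # [4..<k+1] @ [2,0])"
    unfolding permU L2v L3 mv01 ..
  also have "[4..<k+1] = 4 # [5..<k+1]" using k4 by (simp add: upt_conv_Cons)
  also have "perm (k+1) 1 (1 # 3 # (4 # [5..<k+1]) @ [2,0]) = 1 # 4 # 3 # [5..<k+1] @ [2,0]"
    by (simp only: append_Cons) (rule sig, use k4 in auto)
  finally show ?thesis by simp
qed

lemma L2k: "L2 ! k = k"
proof -
  have e: "L2 = (2#1#0#[3..<k]) @ [k]" unfolding L2_def using k4 by simp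
  have len: "length (2#1#0#[3..<k]) = k" using k4 by simp
  show ?thesis by (metis e len nth_append_length)
qed

lemma hd0: "hd [0..<k+1] = 0" by (simp only: up list.sel)

lemma S2: "mv 0 1 (perm (k+1) 1 [0..<k+1]) = 2#0#1#[3..<k+1]"
  by (simp only: L1v mv01)

lemma hds: "map hd (calls (k + 1) 0 [0..<k + 1]) = 0 # 2 # map (\<lambda>j. k - j) [0..<k-2] @ [1]"
proof -
  have M: "map (\<lambda>j. hd (mv 0 k (foldl (\<lambda>A _. f A) L2 [0..<j]))) [0..<k-2] = map (\<lambda>j. k - j) [0..<k-2]"
  proof (rule map_cong[OF refl])
    fix j assume "j \<in> set [0..<k-2]"
    then have j: "j < k - 2" by simp
    show "hd (mv 0 k (foldl (\<lambda>A _. f A) L2 [0..<j])) = k - j"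
    proof (cases j)
      case 0 then show ?thesis by (simp only: hd_mv0 L2k upt_0 foldl_Nil diff_zero)
    next
      case (Suc i)
      then have "foldl (\<lambda>A _. f A) L2 [0..<j] = G k (k - i)" using iter[of i] j by simp
      then show ?thesis unfolding hd_mv0 using G_nth[of "k-i"] j Suc k4 by simp
    qed
  qed
  have "map hd (calls (k + 1) 0 [0..<k + 1]) = hd [0..<k+1] # hd (mv 0 1 (perm (k+1) 1 [0..<k+1])) #
     map (\<lambda>j. hd (mv 0 k (foldl (\<lambda>A _. f A) L2 [0..<j]))) [0..<k-2] @
     [hd (mv 0 1 (foldl (\<lambda>A _. f A) L2 [0..<k-2]))]"
    by (simp only: callsU L2v list.map map_append map_map comp_def append_Cons append_Nil)
  also have "\<dots> = 0 # 2 # map (\<lambda>j. k - j) [0..<k-2] @ [1]"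
    by (simp only: M hd0 S2 L3 mv01 list.sel append_Cons)
  finally show ?thesis .
qed

theorem main: "length (calls (k + 1) 0 [0..<k + 1]) = k + 1
         \<and> distinct (map hd (calls (k + 1) 0 [0..<k + 1]))
         \<and> perm (k + 1) 0 [0..<k + 1] = [1, 4, 3] @ [5..<k + 1] @ [2, 0]"
proof (intro conjI)
  have "length (calls (k + 1) 0 [0..<k + 1]) = length (map hd (calls (k + 1) 0 [0..<k + 1]))"
    by simp
  also have "\<dots> = k + 1" unfolding hds using k4 by simp
  finally show "length (calls (k + 1) 0 [0..<k + 1]) = k + 1" .
  have "inj_on (\<lambda>j. k - j) {0..<k-2}" by (rule inj_onI) auto
  moreover have "0 \<notin> set (map (\<lambda>j. k - j) [0..<k-2])" by auto
  moreover have "1 \<notin> set (map (\<lambda>j. k - j) [0..<k-2])" by auto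
  moreover have "2 \<notin> set (map (\<lambda>j. k - j) [0..<k-2])" by auto
  ultimately show "distinct (map hd (calls (k + 1) 0 [0..<k + 1]))" unfolding hds
    by (simp add: distinct_map)
  show "perm (k + 1) 0 [0..<k + 1] = [1, 4, 3] @ [5..<k + 1] @ [2, 0]" by (rule final)
qed

end
theorem lemma1:
  fixes k :: nat
  assumes "odd k" and "k > 4"
    and "\<forall>xs :: nat list. length xs = k \<longrightarrow> distinct xs \<longrightarrow>
           perm k 0 xs = xs ! 1 # xs ! 0 # drop 2 xs"
  shows "length (calls (k + 1) 0 [0..<k + 1]) = k + 1
         \<and> distinct (map hd (calls (k + 1) 0 [0..<k + 1]))
         \<and> perm (k + 1) 0 [0..<k + 1] = [1, 4, 3] @ [5..<k + 1] @ [2, 0]"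
proof -
  interpret L1 k using assms by unfold_locales
  show ?thesis by (rule main)
qed

end
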